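(* Let $0<\varepsilon_s<1/2$, $0<\varepsilon_a<1/2$ and $0<\varepsilon_{small}\le\varepsilon_s/2$. Let $\tilde M$ be a finite set of rectangles with $w(i)\le\varepsilon_{small}N$ and $h(i)\le N$ for all $i\in\tilde M$, and with $a(\tilde M)\le(\frac12+\varepsilon_a)N^2$. Then a subset of $\tilde M$ of cardinality at least $(1-2\varepsilon_s-2\varepsilon_a)|\tilde M|$ can be packed (without rotations, with pairwise disjoint interiors) into $[0,(1-\varepsilon_s)N]\times[0,N]$.
   Context: Rectangles are axis-parallel with width $w(i)$ and height $h(i)$; $a(S)=\sum_{i\in S}w(i)h(i)$. *)

theory Defs
  imports Complex_Main
begin

definition area :: "('a \<Rightarrow> real) \<Rightarrow> ('a \<Rightarrow> real) \<Rightarrow> 'a set \<Rightarrow> real" where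
  "area w h S = (\<Sum>i\<in>S. w i * h i)"

definition rect_interior :: "real \<Rightarrow> real \<Rightarrow> real \<Rightarrow> real \<Rightarrow> (real \<times> real) set" where
  "rect_interior x y wd ht = {x<..<x + wd} \<times> {y<..<y + ht}"

definition packable :: "('a \<Rightarrow> real) \<Rightarrow> ('a \<Rightarrow> real) \<Rightarrow> 'a set \<Rightarrow> real \<Rightarrow> real \<Rightarrow> bool" where
  "packable w h S W H \<longleftrightarrow>
     (\<exists>px py :: 'a \<Rightarrow> real.
        (\<forall>i\<in>S. 0 \<le> px i \<and> px i + w i \<le> W \<and> 0 \<le> py i \<and> py i + h i \<le> H) \<and>
        (\<forall>i\<in>S. \<forall>j\<in>S. i \<noteq> j \<longrightarrow>
            rect_interior (px i) (py i) (w i) (h i) \<inter> rect_interior (px j) (py j) (w j) (h j) = {}))"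

end

theory Submission
  imports Defs
begin

definition cst :: "real \<Rightarrow> ('a \<Rightarrow> real) \<Rightarrow> ('a \<Rightarrow> real) \<Rightarrow> 'a \<Rightarrow> real" where
  "cst H w h i = (if h i > H/2 then w i * H else 2 * w i * h i)"

definition placed :: "('a \<Rightarrow> real) \<Rightarrow> ('a \<Rightarrow> real) \<Rightarrow> ('a \<Rightarrow> real) \<Rightarrow> ('a \<Rightarrow> real)
   \<Rightarrow> 'a set \<Rightarrow> real \<Rightarrow> real \<Rightarrow> real \<Rightarrow> bool" where
  "placed w h px py S a b H \<longleftrightarrow>
     (\<forall>i\<in>S. a \<le> px i \<and> px i + w i \<le> b \<and> 0 \<le> py i \<and> py i + h i \<le> H) \<and>
     (\<forall>i\<in>S. \<forall>j\<in>S. i \<noteq> j \<longrightarrow>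
        rect_interior (px i) (py i) (w i) (h i) \<inter> rect_interior (px j) (py j) (w j) (h j) = {})"

lemma rect_disj_x:
  "a + wa \<le> b \<or> b + wb \<le> a \<Longrightarrow> rect_interior a y wa ha \<inter> rect_interior b y' wb hb = {}"
  by (auto simp: rect_interior_def)

lemma rect_disj_y:
  "y + ha \<le> y' \<or> y' + hb \<le> y \<Longrightarrow> rect_interior a y wa ha \<inter> rect_interior b y' wb hb = {}"
  by (auto simp: rect_interior_def)

lemma placed_empty: "placed w h px py {} a b H"
  by (simp add: placed_def)

lemma placed_mono: "placed w h px py S a b H \<Longrightarrow> b \<le> b' \<Longrightarrow> placed w h px py S a b' H"
  unfolding placed_def by force

lemma combine:
  assumes P1: "placed w h px1 py1 C x0 x1 H" and P2: "placed w h px2 py2 R x1 x2 H"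
    and CR: "C \<inter> R = {}" and x01: "x0 \<le> x1" and x12: "x1 \<le> x2"
  shows "\<exists>px py. placed w h px py (C \<union> R) x0 x2 H"
proof -
  define px where "px = (\<lambda>i. if i \<in> C then px1 i else px2 i)"
  define py where "py = (\<lambda>i. if i \<in> C then py1 i else py2 i)"
  have P1a: "\<And>i. i \<in> C \<Longrightarrow> x0 \<le> px1 i \<and> px1 i + w i \<le> x1 \<and> 0 \<le> py1 i \<and> py1 i + h i \<le> H"
    using P1 unfolding placed_def by blast
  have P2a: "\<And>i. i \<in> R \<Longrightarrow> x1 \<le> px2 i \<and> px2 i + w i \<le> x2 \<and> 0 \<le> py2 i \<and> py2 i + h i \<le> H"
    using P2 unfolding placed_def by blast
  have P1b: "\<And>i j. i \<in> C \<Longrightarrow> j \<in> C \<Longrightarrow> i \<noteq> j \<Longrightarrow>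
     rect_interior (px1 i) (py1 i) (w i) (h i) \<inter> rect_interior (px1 j) (py1 j) (w j) (h j) = {}"
    using P1 unfolding placed_def by blast
  have P2b: "\<And>i j. i \<in> R \<Longrightarrow> j \<in> R \<Longrightarrow> i \<noteq> j \<Longrightarrow>
     rect_interior (px2 i) (py2 i) (w i) (h i) \<inter> rect_interior (px2 j) (py2 j) (w j) (h j) = {}"
    using P2 unfolding placed_def by blast
  have A: "\<forall>i\<in>C \<union> R. x0 \<le> px i \<and> px i + w i \<le> x2 \<and> 0 \<le> py i \<and> py i + h i \<le> H"
  proof
    fix i assume i: "i \<in> C \<union> R"
    show "x0 \<le> px i \<and> px i + w i \<le> x2 \<and> 0 \<le> py i \<and> py i + h i \<le> H"
    proof (cases "i \<in> C")
      case True
      then show ?thesis using P1a[OF True] x12 unfolding px_def py_def by auto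
    next
      case False
      then have iR: "i \<in> R" using i by auto
      then show ?thesis using P2a[OF iR] False x01 unfolding px_def py_def by auto
    qed
  qed
  have B: "\<forall>i\<in>C \<union> R. \<forall>j\<in>C \<union> R. i \<noteq> j \<longrightarrow> rect_interior (px i) (py i) (w i) (h i) \<inter> rect_interior (px j) (py j) (w j) (h j) = {}"
  proof (intro ballI impI)
    fix i j assume i: "i \<in> C \<union> R" and j: "j \<in> C \<union> R" and ij: "i \<noteq> j"
    show "rect_interior (px i) (py i) (w i) (h i) \<inter> rect_interior (px j) (py j) (w j) (h j) = {}"
    proof (cases "i \<in> C")
      case iC: True
      show ?thesis
      proof (cases "j \<in> C")
        case True
        then show ?thesis using P1b[OF iC True ij] iC unfolding px_def py_def by simp
      next
        case False
        then have jR: "j \<in> R" using j by auto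
        have "px i + w i \<le> px j" using P1a[OF iC] P2a[OF jR] iC False unfolding px_def by auto
        then show ?thesis by (intro rect_disj_x) simp
      qed
    next
      case False
      then have iR: "i \<in> R" using i by auto
      show ?thesis
      proof (cases "j \<in> C")
        case jC: True
        have "px j + w j \<le> px i" using P1a[OF jC] P2a[OF iR] jC False unfolding px_def by auto
        then show ?thesis by (intro rect_disj_x) simp
      next
        case jC: False
        then have jR: "j \<in> R" using j by auto
        then show ?thesis using P2b[OF iR jR ij] False jC unfolding px_def py_def by simp
      qed
    qed
  qed
  have "placed w h px py (C \<union> R) x0 x2 H" using A B unfolding placed_def by blast
  then show ?thesis by blast
qed

lemma stack:
  fixes h :: "'a \<Rightarrow> real"
  assumes "finite C" "\<forall>i\<in>C. 0 \<le> h i"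
  shows "\<exists>py. (\<forall>i\<in>C. 0 \<le> py i \<and> py i + h i \<le> sum h C) \<and>
     (\<forall>i\<in>C. \<forall>j\<in>C. i \<noteq> j \<longrightarrow> py i + h i \<le> py j \<or> py j + h j \<le> py i)"
  using assms
proof (induction C rule: finite_induct)
  case empty
  then show ?case by simp
next
  case (insert a F)
  then obtain py where py: "\<forall>i\<in>F. 0 \<le> py i \<and> py i + h i \<le> sum h F"
     "\<forall>i\<in>F. \<forall>j\<in>F. i \<noteq> j \<longrightarrow> py i + h i \<le> py j \<or> py j + h j \<le> py i" by auto
  have sF: "0 \<le> sum h F" using insert.prems by (intro sum_nonneg) auto
  have ha: "0 \<le> h a" using insert.prems by auto
  have sI: "sum h (insert a F) = h a + sum h F" using insert.hyps by simp
  define py' where "py' = py(a := sum h F)"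
  have A: "\<forall>i\<in>insert a F. 0 \<le> py' i \<and> py' i + h i \<le> sum h (insert a F)"
  proof
    fix i assume i: "i \<in> insert a F"
    show "0 \<le> py' i \<and> py' i + h i \<le> sum h (insert a F)"
    proof (cases "i = a")
      case True then show ?thesis using sF sI unfolding py'_def by simp
    next
      case False then have "i \<in> F" using i by simp
      then show ?thesis using py(1) False sI ha unfolding py'_def by force
    qed
  qed
  have B: "\<forall>i\<in>insert a F. \<forall>j\<in>insert a F. i \<noteq> j \<longrightarrow> py' i + h i \<le> py' j \<or> py' j + h j \<le> py' i"
  proof (intro ballI impI)
    fix i j assume i: "i \<in> insert a F" and j: "j \<in> insert a F" and ij: "i \<noteq> j"
    show "py' i + h i \<le> py' j \<or> py' j + h j \<le> py' i"
    proof (cases "i = a")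
      case True
      then have "j \<in> F" "j \<noteq> a" using j ij by auto
      then show ?thesis using py(1) True unfolding py'_def by auto
    next
      case False
      then have iF: "i \<in> F" using i by auto
      show ?thesis
      proof (cases "j = a")
        case True
        then show ?thesis using py(1) iF False unfolding py'_def by auto
      next
        case jF: False
        then have "j \<in> F" using j by auto
        then show ?thesis using py(2) iF ij False jF unfolding py'_def by auto
      qed
    qed
  qed
  show ?case using A B by blast
qed

lemma column:
  assumes "finite C" "\<forall>i\<in>C. 0 < h i \<and> w i \<le> wc" "sum h C \<le> H"
  shows "\<exists>px py. placed w h px py C x0 (x0 + wc) H"
proof -
  obtain py where py: "\<forall>i\<in>C. 0 \<le> py i \<and> py i + h i \<le> sum h C"
     "\<forall>i\<in>C. \<forall>j\<in>C. i \<noteq> j \<longrightarrow> py i + h i \<le> py j \<or> py j + h j \<le> py i"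
    using stack[of C h] assms by fastforce
  have A: "\<forall>i\<in>C. x0 \<le> x0 \<and> x0 + w i \<le> x0 + wc \<and> 0 \<le> py i \<and> py i + h i \<le> H"
  proof
    fix i assume i: "i \<in> C"
    have "py i + h i \<le> sum h C" "0 \<le> py i" using py i by auto
    moreover have "w i \<le> wc" using i assms(2) by blast
    ultimately show "x0 \<le> x0 \<and> x0 + w i \<le> x0 + wc \<and> 0 \<le> py i \<and> py i + h i \<le> H"
      using assms(3) by linarith
  qed
  have B: "\<forall>i\<in>C. \<forall>j\<in>C. i \<noteq> j \<longrightarrow> rect_interior x0 (py i) (w i) (h i) \<inter> rect_interior x0 (py j) (w j) (h j) = {}"
  proof (intro ballI impI)
    fix i j assume "i \<in> C" "j \<in> C" "i \<noteq> j"
    then show "rect_interior x0 (py i) (w i) (h i) \<inter> rect_interior x0 (py j) (w j) (h j) = {}"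
      using py by (intro rect_disj_y) blast
  qed
  have "placed w h (\<lambda>_. x0) py C x0 (x0 + wc) H" using A B unfolding placed_def by blast
  then show ?thesis by blast
qed

lemma colsel:
  fixes T :: "'a set" and h :: "'a \<Rightarrow> real"
  assumes "finite T" "\<forall>i\<in>T. 0 < h i \<and> h i \<le> H2" "0 \<le> s" "s < sum h T"
  shows "\<exists>C\<subseteq>T. s < sum h C \<and> sum h C \<le> s + H2 \<and> (\<forall>i\<in>C. \<forall>j\<in>T-C. w j \<le> (w i::real))"
  using assms
proof (induction "card T" arbitrary: T s rule: less_induct)
  case less
  have "T \<noteq> {}" using less.prems by auto
  then have "Max (w ` T) \<in> w ` T" using less.prems(1) by (intro Max_in) auto
  then obtain m where m: "m \<in> T" "w m = Max (w ` T)" by (metis imageE)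
  have mx: "\<forall>j\<in>T. w j \<le> w m" using m less.prems(1) by simp
  show ?case
  proof (cases "s < h m")
    case True
    then show ?thesis using m mx less.prems by (intro exI[of _ "{m}"]) auto
  next
    case False
    have sT: "sum h T = h m + sum h (T - {m})" using m less.prems(1) by (simp add: sum.remove)
    have "card (T - {m}) < card T" by (rule card_Diff1_less[OF less.prems(1) m(1)])
    then obtain C where C: "C \<subseteq> T - {m}" "s - h m < sum h C" "sum h C \<le> s - h m + H2"
       "\<forall>i\<in>C. \<forall>j\<in>(T-{m})-C. w j \<le> w i"
      using less.hyps[of "T - {m}" "s - h m"] less.prems False sT by auto
    have fC: "finite C" using C(1) less.prems(1) finite_subset by blast
    have mC: "m \<notin> C" using C(1) by blast
    have "sum h (insert m C) = h m + sum h C" using mC fC by simp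
    then show ?thesis using C mx m
      by (intro exI[of _ "insert m C"]) auto
  qed
qed

lemma avg:
  fixes c :: "'a \<Rightarrow> real"
  assumes "finite M" "\<forall>i\<in>M. 0 \<le> c i" "k \<le> card M"
  shows "\<exists>S\<subseteq>M. card S = k \<and> real (card M) * sum c S \<le> real k * sum c M"
  using assms
proof (induction "card M" arbitrary: M k rule: less_induct)
  case less
  show ?case
  proof (cases "k = card M")
    case True then show ?thesis by auto
  next
    case False
    then have "M \<noteq> {}" using less.prems by auto
    then have "Max (c ` M) \<in> c ` M" using less.prems(1) by (intro Max_in) auto
    then obtain m where m: "m \<in> M" "c m = Max (c ` M)" by (metis imageE)
    have mx: "\<forall>j\<in>M. c j \<le> c m" using m less.prems(1) by simp
    have cM: "card (T::'a set) = card M - 1" if "T = M - {m}" for T using that m less.prems(1) by simp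
    have lt: "card (M - {m}) < card M" by (rule card_Diff1_less[OF less.prems(1) m(1)])
    have kle: "k \<le> card (M - {m})" using False less.prems(3) cM by simp
    obtain S where S: "S \<subseteq> M - {m}" "card S = k"
      "real (card (M - {m})) * sum c S \<le> real k * sum c (M - {m})"
      using less.hyps[OF lt, of k] less.prems kle by auto
    have fS: "finite S" using S(1) less.prems(1) finite_subset by blast
    have sS: "sum c S \<le> real k * c m"
      using sum_bounded_above[of S c "c m"] S mx by auto
    have sM: "sum c M = c m + sum c (M - {m})" using m less.prems(1) by (simp add: sum.remove)
    have nM: "real (card M) = real (card (M - {m})) + 1"
      using card.remove[OF less.prems(1) m(1)] by simp
    have "real (card M) * sum c S = real (card (M - {m})) * sum c S + sum c S"
      using nM by (simp add: algebra_simps)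
    also have "\<dots> \<le> real k * sum c M" using S(3) sS sM by (simp add: algebra_simps)
    finally show ?thesis using S by auto
  qed
qed

lemma cst_pos: "0 < H \<Longrightarrow> 0 < w i \<Longrightarrow> 0 < h i \<Longrightarrow> 0 < cst H w h i"
  unfolding cst_def by auto

lemma pack:
  fixes T :: "'a set" and w h :: "'a \<Rightarrow> real"
  assumes "finite T" "0 < H" "0 \<le> D" "\<forall>i\<in>T. 0 < w i \<and> w i \<le> D \<and> 0 < h i \<and> h i \<le> H"
    "sum (cst H w h) T \<le> (W - D) * H"
  shows "\<exists>px py. placed w h px py T x0 (x0 + W) H"
  using assms
proof (induction "card T" arbitrary: T x0 W D rule: less_induct)
  case less
  note fin = less.prems(1) and Hp = less.prems(2) and Dp = less.prems(3)
    and bnd = less.prems(4) and cost = less.prems(5)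
  show ?case
  proof (cases "T = {}")
    case True
    then show ?thesis using placed_empty by blast
  next
    case False
    have cpos: "0 < sum (cst H w h) T"
      using False fin bnd Hp by (intro sum_pos) (auto intro: cst_pos)
    have WD: "D < W"
    proof (rule ccontr)
      assume "\<not> D < W"
      then have "(W - D) * H \<le> 0" using Hp by (simp add: mult_nonpos_nonneg)
      then show False using cpos cost by linarith
    qed
    show ?thesis
    proof (cases "sum h T \<le> H")
      case True
      obtain px py where "placed w h px py T x0 (x0 + D) H"
        using column[of T h w D H x0] fin bnd True by auto
      then show ?thesis using placed_mono[of w h px py T x0 "x0 + D" H "x0 + W"] WD by auto
    next
      case sumH: False
      show ?thesis
      proof (cases "\<exists>m\<in>T. h m > H/2")
        case True
        then obtain m where m: "m \<in> T" "h m > H/2" by blast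
        have cm: "cst H w h m = w m * H" using m unfolding cst_def by simp
        have cT: "sum (cst H w h) T = w m * H + sum (cst H w h) (T - {m})"
          using m fin cm by (simp add: sum.remove)
        have cR: "sum (cst H w h) (T - {m}) \<le> (W - w m - D) * H"
          using cT cost by (simp add: algebra_simps)
        have "0 \<le> sum (cst H w h) (T - {m})"
          using bnd Hp by (intro sum_nonneg) (auto intro: less_imp_le[OF cst_pos])
        then have "w m * H \<le> (W - D) * H" using cT cost by linarith
        then have wmW: "w m \<le> W - D" using Hp by (rule mult_right_le_imp_le)
        have lt: "card (T - {m}) < card T" by (rule card_Diff1_less[OF fin m(1)])
        have bnd': "\<forall>i\<in>T - {m}. 0 < w i \<and> w i \<le> D \<and> 0 < h i \<and> h i \<le> H" using bnd by blast
        have fin': "finite (T - {m})" using fin by blast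
        obtain px2 py2 where P2: "placed w h px2 py2 (T - {m}) (x0 + w m) (x0 + w m + (W - w m)) H"
          using less.hyps[OF lt fin' Hp Dp bnd' cR] by blast
        obtain px1 py1 where P1: "placed w h px1 py1 {m} x0 (x0 + w m) H"
          using column[of "{m}" h w "w m" H x0] m bnd by auto
        have "\<exists>px py. placed w h px py ({m} \<union> (T - {m})) x0 (x0 + w m + (W - w m)) H"
          by (rule combine[OF P1 P2]) (use m bnd wmW Dp in auto)
        moreover have "{m} \<union> (T - {m}) = T" using m by auto
        ultimately show ?thesis by simp
      next
        case False
        then have short: "\<forall>i\<in>T. 0 < h i \<and> h i \<le> H/2" using bnd by force
        obtain C where C: "C \<subseteq> T" "H/2 < sum h C" "sum h C \<le> H/2 + H/2"
            "\<forall>i\<in>C. \<forall>j\<in>T-C. w j \<le> w i"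
          using colsel[of T h "H/2" "H/2" w] fin short Hp sumH by auto
        have fC: "finite C" using C(1) fin finite_subset by blast
        have Cne: "C \<noteq> {}" using C(2) Hp by auto
        define R where "R = T - C"
        have Rne: "R \<noteq> {}"
        proof
          assume "R = {}"
          then have "C = T" using C(1) R_def by auto
          then show False using C(3) sumH by simp
        qed
        have fR: "finite R" using fin R_def by simp
        define wc where "wc = Max (w ` C)"
        define D2 where "D2 = Max (w ` R)"
        have wcD: "wc \<le> D" unfolding wc_def using fC Cne C(1) bnd by (subst Max_le_iff) auto
        have wiC: "\<forall>i\<in>C. w i \<le> wc" unfolding wc_def using fC by simp
        have wR: "\<forall>i\<in>R. w i \<le> D2" unfolding D2_def using fR by simp
        have "Max (w ` R) \<in> w ` R" using fR Rne by (intro Max_in) auto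
        then obtain j where j: "j \<in> R" "D2 = w j" unfolding D2_def by (metis imageE)
        have D2C: "\<forall>i\<in>C. D2 \<le> w i" using C(4) j R_def by auto
        have D2p: "0 \<le> D2" using j bnd R_def by force
        have cC: "\<forall>i\<in>C. cst H w h i = 2 * w i * h i" using short C(1) unfolding cst_def by force
        have "sum (cst H w h) C = (\<Sum>i\<in>C. 2 * w i * h i)" using cC by simp
        also have "\<dots> \<ge> (\<Sum>i\<in>C. 2 * D2 * h i)"
        proof (rule sum_mono)
          fix i assume i: "i \<in> C"
          have "2 * D2 \<le> 2 * w i" using D2C i by simp
          moreover have "0 \<le> h i" using short i C(1) by fastforce
          ultimately show "2 * D2 * h i \<le> 2 * w i * h i" by (rule mult_right_mono)
        qed
        also have "(\<Sum>i\<in>C. 2 * D2 * h i) = 2 * D2 * sum h C" by (simp add: sum_distrib_left)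
        finally have cC2: "sum (cst H w h) C \<ge> 2 * D2 * sum h C" .
        have "2 * D2 * (H/2) \<le> 2 * D2 * sum h C" using C(2) D2p by (intro mult_left_mono) auto
        then have cCb: "sum (cst H w h) C \<ge> D2 * H" using cC2 by simp
        have cT: "sum (cst H w h) T = sum (cst H w h) C + sum (cst H w h) R"
          unfolding R_def using sum.subset_diff[OF C(1) fin, of "cst H w h"] by linarith
        have cR: "sum (cst H w h) R \<le> (W - wc - D2) * H"
        proof -
          have "sum (cst H w h) R \<le> (W - D) * H - D2 * H" using cT cost cCb by linarith
          also have "\<dots> \<le> (W - wc - D2) * H" using wcD Hp by (simp add: algebra_simps)
          finally show ?thesis .
        qed
        have lt: "card R < card T" unfolding R_def using fin C(1) Cne
          by (intro psubset_card_mono) auto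
        have bndR: "\<forall>i\<in>R. 0 < w i \<and> w i \<le> D2 \<and> 0 < h i \<and> h i \<le> H"
          using bnd wR unfolding R_def by blast
        obtain px2 py2 where P2: "placed w h px2 py2 R (x0 + wc) (x0 + wc + (W - wc)) H"
          using less.hyps[OF lt fR Hp D2p bndR cR] by blast
        obtain px1 py1 where P1: "placed w h px1 py1 C x0 (x0 + wc) H"
          using column[of C h w wc H x0] fC C(1) C(3) bnd wiC by auto
        have wc0: "0 \<le> wc" using Cne wiC C(1) bnd by force
        have "\<exists>px py. placed w h px py (C \<union> R) x0 (x0 + wc + (W - wc)) H"
          by (rule combine[OF P1 P2]) (use wc0 wcD WD R_def in auto)
        moreover have "C \<union> R = T" using C(1) R_def by auto
        ultimately show ?thesis by simp
      qed
    qed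
  qed
qed

theorem mainTheorem16:
  fixes M :: "'a set" and w h :: "'a \<Rightarrow> real"
    and N eps_s eps_a eps_small :: real
  assumes "0 < eps_s" "eps_s < 1/2"
    and "0 < eps_a" "eps_a < 1/2"
    and "0 < eps_small" "eps_small \<le> eps_s / 2"
    and "finite M"
    and "\<And>i. i \<in> M \<Longrightarrow> 0 < w i \<and> 0 < h i"
    and "\<And>i. i \<in> M \<Longrightarrow> w i \<le> eps_small * N"
    and "\<And>i. i \<in> M \<Longrightarrow> h i \<le> N"
    and "area w h M \<le> (1/2 + eps_a) * N^2"
  shows "\<exists>S\<subseteq>M. real (card S) \<ge> (1 - 2*eps_s - 2*eps_a) * real (card M)
                \<and> packable w h S ((1 - eps_s) * N) N"
proof -
  note es1 = assms(1) and es2 = assms(2) and ea1 = assms(3) and ea2 = assms(4)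
    and sm1 = assms(5) and sm2 = assms(6) and fin = assms(7) and pos = assms(8)
    and wb = assms(9) and hb = assms(10) and ar = assms(11)
  define x where "x = 1 - 2*eps_s - 2*eps_a"
  define n where "n = card M"
  define c where "c = cst N w h"
  have pe: "packable w h {} W H" for W H by (simp add: packable_def)
  show ?thesis
  proof (cases "M = {} \<or> x \<le> 0")
    case True
    have "real (card {}) \<ge> x * real (card M)"
      using True by (auto simp: mult_nonpos_nonneg)
    then show ?thesis using pe unfolding x_def by blast
  next
    case False
    then have Mne: "M \<noteq> {}" and xp: "0 < x" by auto
    then obtain i0 where i0: "i0 \<in> M" by blast
    have Np: "0 < N" using pos[OF i0] hb[OF i0] by linarith
    have np: "0 < n" unfolding n_def using fin Mne by (simp add: card_gt_0_iff)
    have cnn: "\<forall>i\<in>M. 0 \<le> c i" unfolding c_def using pos Np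
      by (auto intro: less_imp_le[OF cst_pos])
    have cle: "c i \<le> eps_small * N * N" if i: "i \<in> M" for i
    proof (cases "h i > N/2")
      case True
      then have "c i = w i * N" unfolding c_def cst_def by simp
      also have "\<dots> \<le> eps_small * N * N" using wb[OF i] Np by (intro mult_right_mono) auto
      finally show ?thesis .
    next
      case False
      then have "c i = 2 * w i * h i" unfolding c_def cst_def by simp
      also have "\<dots> \<le> 2 * w i * (N/2)" using False pos[OF i] by (intro mult_left_mono) auto
      also have "\<dots> = w i * N" by simp
      also have "\<dots> \<le> eps_small * N * N" using wb[OF i] Np by (intro mult_right_mono) auto
      finally show ?thesis .
    qed
    have c2a: "c i \<le> 2 * (w i * h i)" if i: "i \<in> M" for i
    proof (cases "h i > N/2")
      case True
      then have "c i = w i * N" unfolding c_def cst_def by simp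
      also have "\<dots> \<le> w i * (2 * h i)" using True pos[OF i] by (intro mult_left_mono) auto
      finally show ?thesis by simp
    next
      case False
      then show ?thesis unfolding c_def cst_def by simp
    qed
    have CM: "sum c M \<le> (1 + 2*eps_a) * N^2"
    proof -
      have "sum c M \<le> (\<Sum>i\<in>M. 2 * (w i * h i))" using c2a by (intro sum_mono) auto
      also have "\<dots> = 2 * area w h M" unfolding area_def by (simp add: sum_distrib_left)
      also have "\<dots> \<le> (1 + 2*eps_a) * N^2"
      proof -
        have "(1 + 2*eps_a) * N^2 = 2 * ((1/2 + eps_a) * N^2)" by (simp add: algebra_simps)
        then show ?thesis using ar by linarith
      qed
      finally show ?thesis .
    qed
    have CM0: "0 \<le> sum c M" using cnn by (intro sum_nonneg) auto
    define k where "k = nat \<lceil>x * real n\<rceil>"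
    have xn0: "0 < x * real n" using xp np by simp
    have x1: "x \<le> 1" unfolding x_def using es1 ea1 by simp
    have kge: "x * real n \<le> real k" unfolding k_def using xn0
      by (metis le_of_int_ceiling of_int_of_nat_eq of_nat_nat ceiling_le_zero not_less less_imp_le)
    have "\<lceil>x * real n\<rceil> \<le> int n"
    proof -
      have "x * real n \<le> real n" using x1 xp by (intro mult_left_le_one_le) auto
      then have "x * real n \<le> of_int (int n)" by simp
      then show ?thesis by (rule ceiling_le)
    qed
    then have kle: "k \<le> n" unfolding k_def by (metis nat_int nat_mono)
    have kpos: "1 \<le> k" using kge xn0 by (cases k) auto
    have km: "real (k - 1) < x * real n"
    proof -
      have "real (k - 1) = real k - 1" using kpos by simp
      also have "real k = of_int \<lceil>x * real n\<rceil>" unfolding k_def using xn0 by simp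
      finally show ?thesis using ceiling_correct[of "x * real n"] by linarith
    qed
    obtain S0 where S0: "S0 \<subseteq> M" "card S0 = k - 1" "real n * sum c S0 \<le> real (k - 1) * sum c M"
    proof -
      have "k - 1 \<le> card M" using kle n_def by simp
      from avg[OF fin cnn this] show ?thesis using that n_def by blast
    qed
    have "card S0 < card M" using S0(2) kle kpos n_def by simp
    then have "M - S0 \<noteq> {}" using S0(1) by auto
    then obtain j where j: "j \<in> M" "j \<notin> S0" by blast
    have fS0: "finite S0" using S0(1) fin finite_subset by blast
    define S where "S = insert j S0"
    have cS: "card S = k" unfolding S_def using fS0 j S0(2) kpos by simp
    have sS: "sum c S = c j + sum c S0" unfolding S_def using fS0 j by simp
    have "real n * sum c S0 \<le> (x * real n) * sum c M"
      using S0(3) km CM0 by (smt (verit) mult_right_mono)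
    then have sS0: "sum c S0 \<le> x * sum c M" using np by (simp add: mult.commute mult.left_commute)
    have xe: "x * (1 + 2*eps_a) = 1 - 2*eps_s - 4*eps_s*eps_a - 4*eps_a^2"
      unfolding x_def by (simp add: algebra_simps power2_eq_square)
    have "x * (1 + 2*eps_a) \<le> 1 - 2*eps_s" using xe es1 ea1
      by (smt (verit) mult_pos_pos zero_le_power2)
    then have xC: "x * sum c M \<le> (1 - 2*eps_s) * N^2"
    proof -
      assume h1: "x * (1 + 2*eps_a) \<le> 1 - 2*eps_s"
      have "x * sum c M \<le> x * ((1 + 2*eps_a) * N^2)" using CM xp by (intro mult_left_mono) auto
      also have "\<dots> = (x * (1 + 2*eps_a)) * N^2" by simp
      also have "\<dots> \<le> (1 - 2*eps_s) * N^2" using h1 by (intro mult_right_mono) auto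
      finally show ?thesis .
    qed
    have tot: "sum c S \<le> ((1 - eps_s) * N - eps_small * N) * N"
    proof -
      have "sum c S \<le> eps_small * N * N + (1 - 2*eps_s) * N^2" using sS cle[OF j(1)] sS0 xC by linarith
      also have "\<dots> = (eps_small + (1 - 2*eps_s)) * (N * N)" by (simp add: algebra_simps power2_eq_square)
      also have "\<dots> \<le> ((1 - eps_s) - eps_small) * (N * N)" using sm2 Np by (intro mult_right_mono) auto
      also have "\<dots> = ((1 - eps_s) * N - eps_small * N) * N" by (simp add: algebra_simps)
      finally show ?thesis .
    qed
    have SM: "S \<subseteq> M" unfolding S_def using S0(1) j by auto
    have fS: "finite S" using SM fin finite_subset by blast
    have bS: "\<forall>i\<in>S. 0 < w i \<and> w i \<le> eps_small * N \<and> 0 < h i \<and> h i \<le> N"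
      using SM pos wb hb by blast
    obtain px py where P: "placed w h px py S 0 (0 + (1 - eps_s) * N) N"
      using pack[OF fS Np _ bS, of "(1 - eps_s) * N" 0] tot sm1 Np unfolding c_def by auto
    have "packable w h S ((1 - eps_s) * N) N"
      using P unfolding placed_def packable_def by auto
    moreover have "real (card S) \<ge> x * real (card M)" using cS kge n_def by simp
    ultimately show ?thesis using SM unfolding x_def by blast
  qed
qed

end
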